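(* Let $\mathbf{A}$ be a $0$-$1$ matrix of full row rank with $I$ columns and at least one $1$ in every column, and let $RM_{\boldsymbol\lambda}(\mathbf{A})=\{\boldsymbol\lambda\in\mathbb{R}^I_{>0}:\ \log\boldsymbol\lambda=\mathbf{A}'\boldsymbol\theta \text{ for some }\boldsymbol\theta\}$. Let $\{\boldsymbol\lambda_0^{r}\}_{r\ge1}\subset RM_{\boldsymbol\lambda}(\mathbf{A})$ be a sequence of true parameters with $\|\boldsymbol\lambda_0^r\|:=\min_{i}\lambda^r_{0,i}\to\infty$, and for each $r$ let $\boldsymbol Y^r=(Y^r_1,\dots,Y^r_I)$ have independent components $Y^r_i\sim\mathrm{Poisson}(\lambda^r_{0,i})$. Assume that the maximum likelihood estimate $\hat{\boldsymbol\lambda}^r$ of $\boldsymbol\lambda_0^r$ under $RM_{\boldsymbol\lambda}(\mathbf{A})$ exists. Then $$\Delta[(\boldsymbol\lambda_0^r)^{-1/2}]\,(\hat{\boldsymbol\lambda}^r-\boldsymbol\lambda_0^r)=O_p(\mathbf 1)\quad\text{as } \|\boldsymbol\lambda_0^r\|\to\infty.$$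
   Context: $\Delta[\boldsymbol v]$ denotes the diagonal matrix with the vector $\boldsymbol v$ on its diagonal; powers and logarithms of vectors are taken componentwise. $\|\boldsymbol\lambda\|$ denotes the minimum component $\min_i\lambda_i$ (not a standard norm). The MLE under the model is the maximizer over $RM_{\boldsymbol\lambda}(\mathbf{A})$ of the Poisson log-likelihood $\boldsymbol Y'\log\boldsymbol\lambda-\mathbf 1'\boldsymbol\lambda$; it is said to exist when this maximum is attained in $RM_{\boldsymbol\lambda}(\mathbf{A})$. *)

theory Defs
  imports "HOL-Analysis.Analysis" "HOL-Probability.Probability"
begin

text \<open>Rows of A indexed by 'j (J parameters), columns by 'i (I cells).\<close>

definition RM :: "real^'i^'j \<Rightarrow> (real^'i) set" where
  "RM A = {lam. (\<forall>i. lam $ i > 0) \<and> (\<exists>\<theta>::real^'j. (\<chi> i. ln (lam $ i)) = transpose A *v \<theta>)}"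

definition pois_loglik :: "('i::finite \<Rightarrow> nat) \<Rightarrow> real^'i \<Rightarrow> real" where
  "pois_loglik y lam = (\<Sum>i\<in>UNIV. real (y i) * ln (lam $ i)) - (\<Sum>i\<in>UNIV. lam $ i)"

definition is_MLE :: "real^'i::finite^'j \<Rightarrow> ('i \<Rightarrow> nat) \<Rightarrow> real^'i \<Rightarrow> bool" where
  "is_MLE A y lam \<longleftrightarrow> lam \<in> RM A \<and> (\<forall>mu\<in>RM A. pois_loglik y mu \<le> pois_loglik y lam)"

definition min_comp :: "real^'i::finite \<Rightarrow> real" where
  "min_comp lam = Min (range (\<lambda>i. lam $ i))"

definition pois_vec :: "real^'i::finite \<Rightarrow> ('i \<Rightarrow> nat) pmf" where
  "pois_vec lam = Pi_pmf UNIV 0 (\<lambda>i. poisson_pmf (lam $ i))"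

end

theory Submission
  imports Defs
begin

lemma ln_lower: "x > 0 \<Longrightarrow> ln x \<ge> 1 - 1/x" for x::real
proof -
  assume "x>0"
  have "ln (1/x) \<le> 1/x - 1" using \<open>x>0\<close> by (intro ln_le_minus_one) auto
  then show ?thesis using \<open>x>0\<close> by (simp add: ln_div)
qed

lemma sq_bound: "a \<ge> 0 \<Longrightarrow> D \<ge> 0 \<Longrightarrow> a*a \<le> D \<Longrightarrow> a \<le> D + 1" for a D :: real
proof (cases "a \<le> 1")
  case False
  assume "a*a \<le> D"
  moreover have "a \<le> a*a" using False by (simp add: mult_le_cancel_left1)
  ultimately show ?thesis by simp
qed simp

lemma comp_bound:
  fixes lam mu C :: real
  assumes mu: "mu \<ge> 1" and lam: "lam > 0" and C: "C \<ge> 0"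
    and ab: "(\<bar>lam - mu\<bar> / sqrt mu) * (\<bar>ln lam - ln mu\<bar> * sqrt mu) \<le> C"
  shows "\<bar>lam - mu\<bar> / sqrt mu \<le> 3*C+1"
proof -
  define a where "a = \<bar>lam - mu\<bar> / sqrt mu"
  define b where "b = \<bar>ln lam - ln mu\<bar> * sqrt mu"
  have sm: "sqrt mu \<ge> 1" using mu by simp
  have a0: "a \<ge> 0" and b0: "b \<ge> 0" unfolding a_def b_def using sm by auto
  have abC: "a*b \<le> C" using ab a_def b_def by simp
  define x where "x = lam / mu"
  have x0: "x > 0" using lam mu by (simp add: x_def)
  have lnx: "ln lam - ln mu = ln x" using lam mu by (simp add: x_def ln_div)
  have lmx: "lam - mu = mu * (x - 1)" using mu by (simp add: x_def field_simps)
  have aeq: "a = sqrt mu * \<bar>x - 1\<bar>"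
  proof -
    have "a = mu * \<bar>x-1\<bar> / sqrt mu" unfolding a_def lmx using mu by (simp add: abs_mult)
    also have "\<dots> = sqrt mu * \<bar>x - 1\<bar>" using mu
      by (metis (no_types, opaque_lifting) abs_of_nonneg less_eq_real_def linorder_not_le not_one_le_zero order_trans real_div_sqrt times_divide_eq_left)
    finally show ?thesis .
  qed
  have beq: "b = sqrt mu * \<bar>ln x\<bar>" unfolding b_def lnx by simp
  show ?thesis
  proof (cases "x < 1")
    case True
    have "ln x \<le> x - 1" using x0 by (rule ln_le_minus_one)
    hence "\<bar>ln x\<bar> \<ge> \<bar>x - 1\<bar>" using True x0 ln_less_zero_iff by auto
    hence "b \<ge> a" using aeq beq sm by (simp add: mult_left_mono)
    hence "a*a \<le> C" using abC a0 by (meson mult_left_mono order_trans)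
    hence "a \<le> C + 1" using a0 C by (rule sq_bound[rotated 2])
    thus ?thesis using C a_def by simp
  next
    case False
    show ?thesis
    proof (cases "x \<le> 3")
      case True
      have "ln x \<ge> 1 - 1/x" using x0 by (rule ln_lower)
      moreover have "1 - 1/x = (x-1)/x" using x0 by (simp add: field_simps)
      moreover have "(x-1)/x \<ge> (x-1)/3" using True False x0 by (intro divide_left_mono) auto
      ultimately have l3: "ln x \<ge> (x-1)/3" by linarith
      have "x - 1 \<ge> 0" using False by simp
      hence "\<bar>ln x\<bar> \<ge> \<bar>x - 1\<bar>/3" using l3 by linarith
      hence "sqrt mu * \<bar>ln x\<bar> \<ge> sqrt mu * (\<bar>x - 1\<bar>/3)" using sm by (intro mult_left_mono) auto
      hence "b \<ge> a/3" using aeq beq by simp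
      hence "a*(a/3) \<le> C" using abC a0 by (meson mult_left_mono order_trans)
      hence "a*a \<le> 3*C" by simp
      hence "a \<le> 3*C + 1" using a0 C by (intro sq_bound) auto
      thus ?thesis using a_def by simp
    next
      case F2: False
      have "ln 3 \<ge> (1::real)" using exp_le by (subst ln_ge_iff) auto
      moreover have "ln 3 \<le> ln x" using F2 x0 by simp
      ultimately have l1: "ln x \<ge> 1" by linarith
      have "1 * 1 \<le> sqrt mu * \<bar>ln x\<bar>" using sm l1 by (intro mult_mono) auto
      hence b1: "b \<ge> 1" using beq by simp
      have "a * 1 \<le> a * b" using a0 b1 by (intro mult_left_mono) auto
      hence "a \<le> C" using abC by simp
      thus ?thesis using a_def C by simp
    qed
  qed
qed


lemma ln_abs_bound: "x \<ge> 1/2 \<Longrightarrow> \<bar>ln x\<bar> \<le> 2 * \<bar>x - 1\<bar>" for x :: real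
proof (cases "x \<ge> 1")
  case True
  assume "x \<ge> 1/2"
  have "ln x \<le> x - 1" using True by (intro ln_le_minus_one) auto
  moreover have "ln x \<ge> 0" using True by simp
  ultimately show ?thesis using True by simp
next
  case False
  assume h: "x \<ge> 1/2"
  have "ln x \<ge> 1 - 1/x" using h by (intro ln_lower) auto
  moreover have "1 - 1/x = -((1-x)/x)" using h by (simp add: field_simps)
  moreover have "(1-x)/x \<le> (1-x)/(1/2)" using h False by (intro divide_left_mono) auto
  moreover have "ln x \<le> 0" using False h by simp
  ultimately show ?thesis using False by simp
qed

lemma det:
  fixes mu lam y :: "'i::finite \<Rightarrow> real" and K :: real
  assumes K: "K \<ge> 1" and mu: "\<forall>i. mu i \<ge> 16*K^2" and lam: "\<forall>i. lam i > 0"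
    and dev: "\<forall>i. \<bar>y i - mu i\<bar> \<le> K * sqrt (mu i)"
    and foc: "(\<Sum>i\<in>UNIV. (y i - lam i) * (ln (mu i) - ln (lam i))) = 0"
  shows "\<bar>lam i - mu i\<bar> / sqrt (mu i) \<le> 24 * real CARD('i) * K^2 + 1"
proof -
  define a where "a j = \<bar>lam j - mu j\<bar> / sqrt (mu j)" for j
  define L where "L j = ln (lam j) - ln (mu j)" for j
  define b where "b j = \<bar>L j\<bar> * sqrt (mu j)" for j
  define c where "c j = a j * b j - K * b j" for j
  have K2: "16*K^2 \<ge> 16" using K by (simp add: one_le_power)
  have mu1: "mu j \<ge> 1" for j using mu K2 by (smt (verit))
  have mupos: "mu j > 0" for j using mu1[of j] by simp
  have sq4: "sqrt (mu j) \<ge> 4*K" for j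
  proof -
    have "sqrt (16*K^2) \<le> sqrt (mu j)" using mu by simp
    moreover have "sqrt (16*K^2) = 4*K" using K by (simp add: real_sqrt_mult)
    ultimately show ?thesis by simp
  qed
  have a0: "a j \<ge> 0" for j unfolding a_def using mupos[of j] by simp
  have b0: "b j \<ge> 0" for j unfolding b_def using mupos[of j] by simp
  have sign: "(lam j - mu j) * L j \<ge> 0" for j
  proof (cases "lam j \<le> mu j")
    case True
    hence "L j \<le> 0" unfolding L_def using lam mupos by simp
    thus ?thesis using True by (simp add: mult_nonpos_nonpos)
  next
    case False
    hence "L j \<ge> 0" unfolding L_def using lam mupos by simp
    thus ?thesis using False by simp
  qed
  have abeq: "a j * b j = (lam j - mu j) * L j" for j
  proof -
    have "a j * b j = \<bar>lam j - mu j\<bar> * \<bar>L j\<bar> * (sqrt (mu j) / sqrt (mu j))"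
      unfolding a_def b_def by simp
    also have "\<dots> = \<bar>(lam j - mu j) * L j\<bar>" using mupos[of j] by (simp add: abs_mult)
    also have "\<dots> = (lam j - mu j) * L j" using sign[of j] by simp
    finally show ?thesis .
  qed
  have split: "(lam j - mu j) * L j = (y j - mu j) * L j + (y j - lam j) * (ln (mu j) - ln (lam j))" for j
    unfolding L_def by (simp add: algebra_simps)
  have sab: "(\<Sum>j\<in>UNIV. a j * b j) = (\<Sum>j\<in>UNIV. (y j - mu j) * L j)"
    unfolding abeq split sum.distrib foc by simp
  have "(y j - mu j) * L j \<le> K * b j" for j
  proof -
    have "(y j - mu j) * L j \<le> \<bar>y j - mu j\<bar> * \<bar>L j\<bar>" by (simp add: abs_mult[symmetric])
    also have "\<dots> \<le> K * sqrt (mu j) * \<bar>L j\<bar>" using dev by (intro mult_right_mono) auto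
    finally show ?thesis unfolding b_def by (simp add: algebra_simps)
  qed
  hence "(\<Sum>j\<in>UNIV. a j * b j) \<le> (\<Sum>j\<in>UNIV. K * b j)" unfolding sab by (intro sum_mono) auto
  hence sc: "(\<Sum>j\<in>UNIV. c j) \<le> 0" unfolding c_def sum_subtractf by simp
  have clow: "c j \<ge> -4*K^2" for j
  proof (cases "a j < 2*K")
    case True
    have "\<bar>lam j - mu j\<bar> = a j * sqrt (mu j)" unfolding a_def using mupos[of j] by simp
    also have "\<dots> \<le> 2*K * sqrt (mu j)" using True mupos[of j] by (intro mult_right_mono) auto
    also have "\<dots> \<le> sqrt (mu j) / 2 * sqrt (mu j)" using sq4[of j] mupos[of j]
      by (intro mult_right_mono) auto
    also have "\<dots> = mu j / 2" using mupos[of j] by simp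
    finally have d: "\<bar>lam j - mu j\<bar> \<le> mu j / 2" .
    define x where "x = lam j / mu j"
    have "x \<ge> 1/2"
    proof -
      have "lam j \<ge> mu j / 2" using d by linarith
      thus ?thesis unfolding x_def using mupos[of j] by (simp add: field_simps)
    qed
    hence lx: "\<bar>ln x\<bar> \<le> 2 * \<bar>x - 1\<bar>" by (rule ln_abs_bound)
    have Lx: "L j = ln x" unfolding L_def x_def using lam[rule_format, of j] mupos[of j] by (simp add: ln_div)
    have ax: "a j = sqrt (mu j) * \<bar>x - 1\<bar>"
    proof -
      have "lam j - mu j = mu j * (x - 1)" unfolding x_def using mupos[of j] by (simp add: field_simps)
      hence "a j = mu j * \<bar>x - 1\<bar> / sqrt (mu j)" unfolding a_def using mupos[of j] by (simp add: abs_mult)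
      also have "\<dots> = sqrt (mu j) * \<bar>x - 1\<bar>" using mupos[of j]
        by (metis less_eq_real_def real_div_sqrt times_divide_eq_left)
      finally show ?thesis .
    qed
    have "\<bar>ln x\<bar> * sqrt (mu j) \<le> 2 * \<bar>x - 1\<bar> * sqrt (mu j)" using lx mupos[of j]
      by (intro mult_right_mono) auto
    hence "b j \<le> 2 * a j" unfolding b_def Lx ax by (simp add: algebra_simps)
    hence "b j \<le> 4*K" using True by simp
    hence "K * b j \<le> K * (4*K)" using K by (intro mult_left_mono) auto
    moreover have "a j * b j \<ge> 0" using a0 b0 by simp
    ultimately show ?thesis unfolding c_def by (simp add: power2_eq_square)
  next
    case False
    have "K * b j \<le> a j * b j" using False b0 K by (intro mult_right_mono) auto
    hence "c j \<ge> 0" unfolding c_def by simp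
    moreover have "-4*K^2 \<le> 0" by simp
    ultimately show ?thesis by linarith
  qed
  have ci: "c i \<le> 4 * real CARD('i) * K^2"
  proof -
    have "c i + 4*K^2 \<le> (\<Sum>j\<in>UNIV. c j + 4*K^2)"
      using clow by (intro member_le_sum) (auto, smt (verit) clow)
    also have "\<dots> = (\<Sum>j\<in>UNIV. c j) + real CARD('i) * (4*K^2)" by (simp add: sum.distrib)
    finally have h: "c i + 4*K^2 \<le> (\<Sum>j\<in>UNIV. c j) + real CARD('i) * (4*K^2)" .
    have "real CARD('i) * (4*K^2) = 4 * real CARD('i) * K^2" by simp
    moreover have "0 \<le> K^2" by simp
    ultimately show ?thesis using sc h by linarith
  qed
  show ?thesis
  proof (cases "a i < 2*K")
    case True
    have "2*K \<le> 24 * real CARD('i) * K^2"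
    proof -
      have "2*K \<le> 24*K^2" using K by (simp add: power2_eq_square)
      also have "\<dots> \<le> 24 * real CARD('i) * K^2"
      proof -
        have "1 * K^2 \<le> real CARD('i) * K^2" by (intro mult_right_mono) auto
        thus ?thesis by simp
      qed
      finally show ?thesis .
    qed
    thus ?thesis using True unfolding a_def by simp
  next
    case False
    have "2*K * b i \<le> a i * b i" using False b0 by (intro mult_right_mono) auto
    hence "K * b i \<le> a i * b i / 2" by simp
    hence "a i * b i \<le> 8 * real CARD('i) * K^2" using ci unfolding c_def by simp
    hence "(\<bar>lam i - mu i\<bar> / sqrt (mu i)) * (\<bar>ln (lam i) - ln (mu i)\<bar> * sqrt (mu i)) \<le> 8 * real CARD('i) * K^2"
      unfolding a_def b_def L_def .
    from comp_bound[OF mu1 lam[rule_format] _ this] show ?thesis by simp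
  qed
qed


lemma mle_foc:
  fixes A :: "real^'i::finite^'j::finite"
  assumes mle: "is_MLE A y lh" and mu: "mu \<in> RM A"
  shows "(\<Sum>i\<in>UNIV. (real (y i) - lh $ i) * (ln (mu $ i) - ln (lh $ i))) = 0"
proof -
  from mle have lhRM: "lh \<in> RM A" and opt: "\<forall>m\<in>RM A. pois_loglik y m \<le> pois_loglik y lh"
    unfolding is_MLE_def by auto
  from lhRM obtain th1 where lhp: "\<forall>i. lh $ i > 0" and th1: "(\<chi> i. ln (lh $ i)) = transpose A *v th1"
    unfolding RM_def by auto
  from mu obtain th2 where mup: "\<forall>i. mu $ i > 0" and th2: "(\<chi> i. ln (mu $ i)) = transpose A *v th2"
    unfolding RM_def by auto
  define d where "d i = ln (mu $ i) - ln (lh $ i)" for i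
  define p where "p t = (\<chi> i. lh $ i * exp (t * d i))" for t :: real
  define g where "g t = (\<Sum>i\<in>UNIV. real (y i) * (ln (lh $ i) + t * d i)) - (\<Sum>i\<in>UNIV. lh $ i * exp (t * d i))" for t
  have pRM: "p t \<in> RM A" for t
  proof -
    have pos: "\<forall>i. p t $ i > 0" unfolding p_def using lhp by simp
    have "(\<chi> i. ln (p t $ i)) = (\<chi> i. ln (lh $ i)) + t *\<^sub>R ((\<chi> i. ln (mu $ i)) - (\<chi> i. ln (lh $ i)))"
      unfolding p_def d_def using lhp by (auto simp: vec_eq_iff ln_mult algebra_simps less_imp_neq[symmetric])
    also have "\<dots> = transpose A *v (th1 + t *\<^sub>R (th2 - th1))"
      unfolding th1 th2 by (simp add: algebra_simps)
    finally show ?thesis unfolding RM_def using pos by blast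
  qed
  have gp: "g t = pois_loglik y (p t)" for t
    unfolding g_def pois_loglik_def p_def using lhp by (simp add: ln_mult less_imp_neq[symmetric])
  have g0: "g 0 = pois_loglik y lh"
    unfolding g_def pois_loglik_def by simp
  have le: "\<forall>t. \<bar>0 - t\<bar> < 1 \<longrightarrow> g t \<le> g 0" using opt pRM gp g0 by auto
  have der: "(g has_real_derivative ((\<Sum>i\<in>UNIV. real (y i) * d i) - (\<Sum>i\<in>UNIV. lh $ i * d i))) (at 0)"
  proof -
    have "(g has_real_derivative ((\<Sum>i\<in>UNIV. real (y i) * d i) - (\<Sum>i\<in>UNIV. lh $ i * (exp (0 * d i) * d i)))) (at 0)"
      unfolding g_def[abs_def]
      by (intro DERIV_diff DERIV_sum) (auto intro!: derivative_eq_intros)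
    thus ?thesis by simp
  qed
  have "(\<Sum>i\<in>UNIV. real (y i) * d i) - (\<Sum>i\<in>UNIV. lh $ i * d i) = 0"
    by (rule DERIV_local_max[OF der _ le]) simp
  thus ?thesis unfolding d_def[symmetric] by (simp add: sum_subtractf left_diff_distrib)
qed


lemma fact_step: "real (Suc n) * (m^(Suc n)/fact (Suc n)) = m * (m^n / fact n)" for m :: real
proof -
  have e: "(fact (Suc n) :: real) = (1 + real n) * fact n" by simp
  have p: "1 + real n \<noteq> 0" by simp
  have "real (Suc n) * (m^(Suc n)/fact (Suc n)) = ((1 + real n) * m^(Suc n)) / ((1 + real n) * fact n)"
    by (simp only: of_nat_Suc e times_divide_eq_right)
  also have "\<dots> = m^(Suc n) / fact n" using p by (rule mult_divide_mult_cancel_left)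
  finally show ?thesis by simp
qed

lemma pois_second_moment:
  fixes m :: real assumes m: "m > 0"
  shows "(\<lambda>k. m^k / fact k * exp (-m) * (real k - m)^2) sums m"
proof -
  define f where "f k = m^k / fact k" for k :: nat
  have S0: "f sums exp m" using exp_converges[of m] unfolding f_def by (simp add: divide_inverse_commute)
  define f1 where "f1 k = real k * f k" for k
  have "(\<lambda>n. f1 (Suc n)) = (\<lambda>n. m * f n)"
    unfolding f1_def f_def by (auto simp: fun_eq_iff fact_step simp del: of_nat_Suc)
  hence "(\<lambda>n. f1 (Suc n)) sums (m * exp m)" using sums_mult[OF S0, of m] by simp
  hence S1: "f1 sums (m * exp m)" by (subst (asm) sums_Suc_iff) (simp add: f1_def)
  define f2 where "f2 k = real k * (real k - 1) * f k" for k
  have "(\<lambda>n. f2 (Suc n)) = (\<lambda>n. m * f1 n)"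
  proof
    fix n
    have "f2 (Suc n) = real n * (real (Suc n) * f (Suc n))" unfolding f2_def by simp
    also have "\<dots> = m * f1 n" unfolding f_def fact_step f1_def by simp
    finally show "f2 (Suc n) = m * f1 n" .
  qed
  hence "(\<lambda>n. f2 (Suc n)) sums (m * (m * exp m))" using sums_mult[OF S1, of m] by simp
  hence S2: "f2 sums (m * (m * exp m))" by (subst (asm) sums_Suc_iff) (simp add: f2_def)
  have "(\<lambda>k. f2 k + (1 - 2*m) * f1 k + m^2 * f k) sums (m * (m * exp m) + (1 - 2*m) * (m * exp m) + m^2 * exp m)"
    by (intro sums_add sums_mult S0 S1 S2)
  moreover have "(\<lambda>k. f2 k + (1 - 2*m) * f1 k + m^2 * f k) = (\<lambda>k. f k * (real k - m)^2)"
    unfolding f2_def f1_def by (auto simp: fun_eq_iff power2_eq_square algebra_simps)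
  moreover have "m * (m * exp m) + (1 - 2*m) * (m * exp m) + m^2 * exp m = m * exp m"
    by (simp add: power2_eq_square algebra_simps)
  ultimately have "(\<lambda>k. f k * (real k - m)^2) sums (m * exp m)" by simp
  hence "(\<lambda>k. exp (-m) * (f k * (real k - m)^2)) sums (exp (-m) * (m * exp m))" by (rule sums_mult)
  moreover have "exp (-m) * (m * exp m) = m" by (simp add: exp_minus field_simps)
  ultimately show ?thesis unfolding f_def by (simp add: algebra_simps mult_exp_exp)
qed

lemma pois_tail:
  fixes m t :: real assumes m: "m > 0" and t: "t > 0"
  shows "measure_pmf.prob (poisson_pmf m) {k. \<bar>real k - m\<bar> > t} \<le> m / t^2"
proof -
  define S where "S = {k. \<bar>real k - m\<bar> > t}"
  define h where "h k = m^k / fact k * exp (-m) * (real k - m)^2" for k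
  have hs: "h sums m" unfolding h_def by (rule pois_second_moment[OF m])
  have h0: "h k \<ge> 0" for k unfolding h_def using m by simp
  have "emeasure (measure_pmf (poisson_pmf m)) S = (\<integral>\<^sup>+ k. indicator S k \<partial>measure_pmf (poisson_pmf m))"
    by simp
  also have "\<dots> \<le> (\<integral>\<^sup>+ k. ennreal ((real k - m)^2 / t^2) \<partial>measure_pmf (poisson_pmf m))"
  proof (intro nn_integral_mono)
    fix k
    show "indicator S k \<le> ennreal ((real k - m)^2 / t^2)"
    proof (cases "k \<in> S")
      case True
      hence "t^2 \<le> (real k - m)^2" unfolding S_def using t
        by (metis abs_le_square_iff abs_of_pos less_imp_le mem_Collect_eq)
      hence "1 \<le> (real k - m)^2 / t^2" using t by simp
      thus ?thesis using True by simp
    qed simp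
  qed
  also have "\<dots> = (\<integral>\<^sup>+ k. ennreal (pmf (poisson_pmf m) k) * ennreal ((real k - m)^2 / t^2) \<partial>count_space UNIV)"
    by (rule nn_integral_measure_pmf)
  also have "\<dots> = (\<Sum>k. ennreal (h k / t^2))"
    unfolding nn_integral_count_space_nat using m
    by (intro suminf_cong) (simp add: h_def ennreal_mult'[symmetric])
  also have "\<dots> = ennreal (\<Sum>k. h k / t^2)"
    using h0 t hs by (intro suminf_ennreal2) (auto intro: summable_divide sums_summable)
  also have "(\<Sum>k. h k / t^2) = m / t^2"
    using sums_divide[OF hs, of "t^2"] by (simp add: sums_iff)
  finally have "ennreal (measure_pmf.prob (poisson_pmf m) S) \<le> ennreal (m / t^2)"
    by (simp add: measure_pmf.emeasure_eq_measure)
  thus ?thesis unfolding S_def using m t by (simp add: ennreal_le_iff)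
qed


lemma comp_prob:
  fixes lam :: "real^'i::finite" and K :: real
  assumes pos: "\<forall>i. lam $ i > 0" and K: "K > 0"
  shows "measure_pmf.prob (pois_vec lam) {y. \<bar>real (y i) - lam $ i\<bar> > K * sqrt (lam $ i)} \<le> 1 / K^2"
proof -
  have "measure_pmf.prob (pois_vec lam) {y. \<bar>real (y i) - lam $ i\<bar> > K * sqrt (lam $ i)}
      = measure_pmf.prob (map_pmf (\<lambda>f. f i) (pois_vec lam)) {k. \<bar>real k - lam $ i\<bar> > K * sqrt (lam $ i)}"
    by (simp add: measure_map_pmf vimage_def)
  also have "map_pmf (\<lambda>f. f i) (pois_vec lam) = poisson_pmf (lam $ i)"
    unfolding pois_vec_def by (subst Pi_pmf_component) auto
  also have "measure_pmf.prob (poisson_pmf (lam $ i)) {k. \<bar>real k - lam $ i\<bar> > K * sqrt (lam $ i)}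
      \<le> lam $ i / (K * sqrt (lam $ i))^2"
    using pos K by (intro pois_tail) auto
  also have "\<dots> = 1 / K^2" using pos[rule_format, of i] K by (simp add: power_mult_distrib)
  finally show ?thesis .
qed

theorem lemma3p3:
  fixes A :: "real^'i::finite^'j::finite"
    and lam0 :: "nat \<Rightarrow> real^'i"
  assumes zero_one: "\<forall>j i. A $ j $ i = 0 \<or> A $ j $ i = 1"
    and col_one: "\<forall>i. \<exists>j. A $ j $ i = 1"
    and full_row_rank: "rank A = CARD('j)"
    and in_model: "\<forall>r. lam0 r \<in> RM A"
    and diverge: "filterlim (\<lambda>r. min_comp (lam0 r)) at_top sequentially"
  shows "\<forall>\<epsilon>>0. \<exists>M. \<exists>R. \<forall>r\<ge>R.
           measure_pmf.prob (pois_vec (lam0 r))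
             {y. \<exists>lh. is_MLE A y lh \<and>
                  norm (\<chi> i. (lh $ i - lam0 r $ i) / sqrt (lam0 r $ i)) > M} < \<epsilon>"
proof (intro allI impI)
  fix \<epsilon> :: real assume eps: "\<epsilon> > 0"
  define I where "I = real CARD('i)"
  have I1: "I \<ge> 1" unfolding I_def by simp
  define K where "K = I / \<epsilon> + 1"
  have K1: "K \<ge> 1" unfolding K_def using eps I1 by simp
  define B where "B = 24 * I * K^2 + 1"
  define M where "M = I * B"
  from diverge have "eventually (\<lambda>r. min_comp (lam0 r) \<ge> 16*K^2) sequentially"
    by (simp add: filterlim_at_top)
  then obtain R where R: "\<And>r. r \<ge> R \<Longrightarrow> min_comp (lam0 r) \<ge> 16*K^2"
    unfolding eventually_sequentially by blast
  show "\<exists>M. \<exists>R. \<forall>r\<ge>R. measure_pmf.prob (pois_vec (lam0 r))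
             {y. \<exists>lh. is_MLE A y lh \<and>
                  norm (\<chi> i. (lh $ i - lam0 r $ i) / sqrt (lam0 r $ i)) > M} < \<epsilon>"
  proof (intro exI allI impI)
    fix r assume r: "r \<ge> R"
    define mu where "mu = lam0 r"
    have mubig: "mu $ i \<ge> 16*K^2" for i
    proof -
      have "min_comp mu \<le> mu $ i" unfolding min_comp_def by (intro Min_le) auto
      thus ?thesis using R[OF r] unfolding mu_def by simp
    qed
    have K2: "16*K^2 \<ge> 16" using K1 by (simp add: one_le_power)
    have mupos: "\<forall>i. mu $ i > 0" using mubig K2 by (smt (verit))
    define E where "E i = {y. \<bar>real (y i) - mu $ i\<bar> > K * sqrt (mu $ i)}" for i
    have sub: "{y. \<exists>lh. is_MLE A y lh \<and> norm (\<chi> i. (lh $ i - mu $ i) / sqrt (mu $ i)) > M}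
               \<subseteq> (\<Union>i\<in>UNIV. E i)"
    proof
      fix y assume "y \<in> {y. \<exists>lh. is_MLE A y lh \<and> norm (\<chi> i. (lh $ i - mu $ i) / sqrt (mu $ i)) > M}"
      then obtain lh where mle: "is_MLE A y lh" and big: "norm (\<chi> i. (lh $ i - mu $ i) / sqrt (mu $ i)) > M"
        by auto
      show "y \<in> (\<Union>i\<in>UNIV. E i)"
      proof (rule ccontr)
        assume "y \<notin> (\<Union>i\<in>UNIV. E i)"
        hence dev: "\<forall>i. \<bar>real (y i) - mu $ i\<bar> \<le> K * sqrt (mu $ i)" unfolding E_def by (auto simp: not_less)
        have lhpos: "\<forall>i. lh $ i > 0" using mle unfolding is_MLE_def RM_def by auto
        have foc: "(\<Sum>i\<in>UNIV. (real (y i) - lh $ i) * (ln (mu $ i) - ln (lh $ i))) = 0"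
          using mle in_model unfolding mu_def by (intro mle_foc) auto
        have each: "\<bar>(\<chi> i. (lh $ i - mu $ i) / sqrt (mu $ i)) $ i\<bar> \<le> B" for i
        proof -
          have "\<bar>lh $ i - mu $ i\<bar> / sqrt (mu $ i) \<le> 24 * real CARD('i) * K^2 + 1"
            using det[of K "\<lambda>i. mu $ i" "\<lambda>i. lh $ i" "\<lambda>i. real (y i)" i] K1 mubig lhpos dev foc
            by auto
          thus ?thesis unfolding B_def I_def using mupos[rule_format, of i] by (simp add: abs_divide)
        qed
        have "norm (\<chi> i. (lh $ i - mu $ i) / sqrt (mu $ i))
              \<le> (\<Sum>i\<in>UNIV. \<bar>(\<chi> i. (lh $ i - mu $ i) / sqrt (mu $ i)) $ i\<bar>)"
          by (rule norm_le_l1_cart)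
        also have "\<dots> \<le> (\<Sum>i\<in>(UNIV::'i set). B)" using each by (intro sum_mono) auto
        also have "\<dots> = M" unfolding M_def I_def by simp
        finally show False using big by simp
      qed
    qed
    have "measure_pmf.prob (pois_vec mu) {y. \<exists>lh. is_MLE A y lh \<and> norm (\<chi> i. (lh $ i - mu $ i) / sqrt (mu $ i)) > M}
          \<le> measure_pmf.prob (pois_vec mu) (\<Union>i\<in>UNIV. E i)"
      using sub by (intro measure_pmf.finite_measure_mono) auto
    also have "\<dots> \<le> (\<Sum>i\<in>UNIV. measure_pmf.prob (pois_vec mu) (E i))"
      by (intro measure_pmf.finite_measure_subadditive_finite) auto
    also have "\<dots> \<le> (\<Sum>i\<in>(UNIV::'i set). 1 / K^2)"
      unfolding E_def using mupos K1 by (intro sum_mono comp_prob) auto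
    also have "\<dots> = I / K^2" unfolding I_def by simp
    also have "\<dots> < \<epsilon>"
    proof -
      have "K^2 \<ge> K" using K1 by (simp add: power2_eq_square)
      hence "K^2 > I / \<epsilon>" unfolding K_def by simp
      hence "\<epsilon> * K^2 > I" using eps by (simp add: field_simps)
      thus ?thesis using K1 by (simp add: field_simps)
    qed
    finally show "measure_pmf.prob (pois_vec (lam0 r))
             {y. \<exists>lh. is_MLE A y lh \<and> norm (\<chi> i. (lh $ i - lam0 r $ i) / sqrt (lam0 r $ i)) > M} < \<epsilon>"
      unfolding mu_def .
  qed
qed

end
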